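(* Let $G$ be a graph of order $n\ge 3$, let $\mathbf{x}=(x_1,\ldots,x_n)$ be a nonnegative unit eigenvector of $Q(G)$ for the eigenvalue $q(G)$, and let $u$ be a vertex with $x_u=\min\{x_1,\ldots,x_n\}$. Then \[ \frac{q(G-u)}{n-2}\ge \frac{q(G)}{n-1}\left(1+\frac{1-nx_u^2}{(n-2)(1-x_u^2)}\right)-\frac{1-nx_u^2}{(n-2)(1-x_u^2)}. \]
   Context: All graphs are finite and simple. $Q(G)=D(G)+A(G)$ is the signless Laplacian ($D(G)$ the diagonal degree matrix, $A(G)$ the adjacency matrix) and $q(G)$ its largest eigenvalue. "Unit" means Euclidean norm $1$; the coordinate $x_v$ corresponds to vertex $v$. $G-u$ denotes the graph obtained by deleting $u$ and all incident edges. *)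

theory Defs
  imports Complex_Main
begin

definition simple_graph :: "'a set \<Rightarrow> ('a \<Rightarrow> 'a \<Rightarrow> bool) \<Rightarrow> bool" where
  "simple_graph V E \<longleftrightarrow> finite V \<and> (\<forall>u v. E u v \<longrightarrow> u \<in> V \<and> v \<in> V)
     \<and> (\<forall>u v. E u v \<longrightarrow> E v u) \<and> (\<forall>v. \<not> E v v)"

definition degree :: "'a set \<Rightarrow> ('a \<Rightarrow> 'a \<Rightarrow> bool) \<Rightarrow> 'a \<Rightarrow> nat" where
  "degree V E v = card {w \<in> V. E v w}"

definition signless_laplacian :: "'a set \<Rightarrow> ('a \<Rightarrow> 'a \<Rightarrow> bool) \<Rightarrow> 'a \<Rightarrow> 'a \<Rightarrow> real" where
  "signless_laplacian V E u v =
     (if u = v then real (degree V E u) else 0) + (if E u v then 1 else 0)"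

definition is_eigenvalue :: "'a set \<Rightarrow> ('a \<Rightarrow> 'a \<Rightarrow> real) \<Rightarrow> real \<Rightarrow> bool" where
  "is_eigenvalue V M lam \<longleftrightarrow>
     (\<exists>x. (\<exists>v\<in>V. x v \<noteq> 0) \<and> (\<forall>v\<in>V. (\<Sum>w\<in>V. M v w * x w) = lam * x v))"

definition q_index :: "'a set \<Rightarrow> ('a \<Rightarrow> 'a \<Rightarrow> bool) \<Rightarrow> real" where
  "q_index V E = Max {lam. is_eigenvalue V (signless_laplacian V E) lam}"

definition del_vertex_V :: "'a set \<Rightarrow> 'a \<Rightarrow> 'a set" where
  "del_vertex_V V u = V - {u}"

definition del_vertex_E :: "('a \<Rightarrow> 'a \<Rightarrow> bool) \<Rightarrow> 'a \<Rightarrow> 'a \<Rightarrow> 'a \<Rightarrow> bool" where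
  "del_vertex_E E u a b \<longleftrightarrow> E a b \<and> a \<noteq> u \<and> b \<noteq> u"

end

theory Submission imports Defs "HOL-Analysis.Analysis" "Jordan_Normal_Form.Spectral_Radius" begin

definition qf :: "'a set \<Rightarrow> ('a \<Rightarrow> 'a \<Rightarrow> real) \<Rightarrow> ('a \<Rightarrow> real) \<Rightarrow> real" where
  "qf W M z = (\<Sum>v\<in>W. \<Sum>w\<in>W. M v w * z v * z w)"
definition nsq :: "'a set \<Rightarrow> ('a \<Rightarrow> real) \<Rightarrow> real" where
  "nsq W z = (\<Sum>v\<in>W. (z v)\<^sup>2)"

lemma qf_restrict: "qf W M (restrict y W) = qf W M y"
  unfolding qf_def by (intro sum.cong refl) auto
lemma nsq_restrict: "nsq W (restrict y W) = nsq W y"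
  unfolding nsq_def by (intro sum.cong refl) auto

lemma max_exists:
  assumes fin: "finite W" and ne: "W \<noteq> {}"
  shows "\<exists>z. nsq W z = 1 \<and> (\<forall>y. nsq W y = 1 \<longrightarrow> qf W M y \<le> qf W M z)"
proof -
  define X where "X = product_topology (\<lambda>_. euclideanreal) W"
  define K where "K = {z \<in> topspace X. nsq W z \<in> {1}} \<inter> PiE W (\<lambda>_. {-1..1::real})"
  have proj: "continuous_map X euclideanreal (\<lambda>z. z v)" if "v \<in> W" for v
    unfolding X_def using continuous_map_product_projection[OF that, of "\<lambda>_. euclideanreal"] by simp
  have c1: "compactin X (PiE W (\<lambda>_. {-1..1::real}))"
    unfolding X_def by (simp add: compactin_PiE)
  have cn: "continuous_map X euclideanreal (nsq W)"
    unfolding nsq_def using fin by (intro continuous_intros proj)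
  have cq: "continuous_map X euclideanreal (qf W M)"
    unfolding qf_def using fin by (intro continuous_intros proj)
  have "closedin X {z \<in> topspace X. nsq W z \<in> {1}}"
    by (rule closedin_continuous_map_preimage[OF cn]) simp
  hence cK: "compactin X K" unfolding K_def using c1 closed_Int_compactin by blast
  have "compactin euclideanreal (qf W M ` K)" by (rule image_compactin[OF cK cq])
  hence cim: "compact (qf W M ` K)" by simp
  obtain w0 where w0: "w0 \<in> W" using ne by blast
  define e where "e = restrict (\<lambda>v. if v = w0 then 1 else 0::real) W"
  have "nsq W e = 1" unfolding nsq_def e_def using fin w0
    by (simp add: if_distrib[of "\<lambda>x. x\<^sup>2"] sum.delta cong: if_cong)
  hence "e \<in> K" unfolding K_def X_def e_def by (auto simp: PiE_iff)
  hence "qf W M ` K \<noteq> {}" by blast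
  from compact_attains_sup[OF cim this] obtain z where z: "z \<in> K" "\<forall>y\<in>K. qf W M y \<le> qf W M z"
    by blast
  have "nsq W z = 1" using z(1) unfolding K_def by auto
  moreover have "qf W M y \<le> qf W M z" if "nsq W y = 1" for y
  proof -
    have "\<bar>y v\<bar> \<le> 1" if "v \<in> W" for v
    proof -
      have "(y v)\<^sup>2 \<le> nsq W y" unfolding nsq_def
        by (rule member_le_sum) (use fin that in auto)
      hence "(y v)\<^sup>2 \<le> 1\<^sup>2" using \<open>nsq W y = 1\<close> by simp
      thus ?thesis using abs_le_square_iff[of "y v" 1] by simp
    qed
    hence "restrict y W \<in> K" unfolding K_def X_def using that
      by (auto simp: PiE_iff nsq_restrict abs_le_iff)
    thus ?thesis using z(2) qf_restrict by metis
  qed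
  ultimately show ?thesis by blast
qed

lemma eig_finite:
  assumes fin: "finite W"
  shows "finite {lam. is_eigenvalue W M lam}"
proof -
  define n where "n = card W"
  obtain f where f: "bij_betw f {0..<n} W" using ex_bij_betw_nat_finite[OF fin] n_def by blast
  define A where "A = mat n n (\<lambda>(i,j). M (f i) (f j))"
  have A: "A \<in> carrier_mat n n" unfolding A_def by simp
  have "{lam. is_eigenvalue W M lam} \<subseteq> spectrum A"
  proof
    fix lam assume "lam \<in> {lam. is_eigenvalue W M lam}"
    then obtain x where x: "\<exists>v\<in>W. x v \<noteq> 0" "\<forall>v\<in>W. (\<Sum>w\<in>W. M v w * x w) = lam * x v"
      unfolding is_eigenvalue_def by blast
    define v where "v = vec n (\<lambda>i. x (f i))"
    obtain w where w: "w \<in> W" "x w \<noteq> 0" using x(1) by blast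
    then obtain i where i: "i < n" "f i = w" using f unfolding bij_betw_def by auto
    have "v $ i \<noteq> 0" using i w unfolding v_def by simp
    hence v0: "v \<noteq> 0\<^sub>v n" using i by auto
    have fi: "f i \<in> W" if "i < n" for i using f that unfolding bij_betw_def by auto
    have "A *\<^sub>v v = lam \<cdot>\<^sub>v v"
    proof (rule eq_vecI)
      fix i assume "i < dim_vec (lam \<cdot>\<^sub>v v)"
      hence i: "i < n" unfolding v_def by simp
      have "(A *\<^sub>v v) $ i = (\<Sum>j\<in>{0..<n}. M (f i) (f j) * x (f j))"
        using i unfolding A_def v_def by (simp add: scalar_prod_def)
      also have "\<dots> = (\<Sum>w\<in>W. M (f i) w * x w)"
        by (rule sum.reindex_bij_betw[OF f])
      also have "\<dots> = lam * x (f i)" using x(2) fi[OF i] by blast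
      finally show "(A *\<^sub>v v) $ i = (lam \<cdot>\<^sub>v v) $ i" using i unfolding v_def by simp
    qed (simp add: A_def v_def)
    hence "eigenvector A v lam" unfolding eigenvector_def using v0 A unfolding v_def by simp
    thus "lam \<in> spectrum A" unfolding spectrum_def eigenvalue_def by blast
  qed
  thus ?thesis using card_finite_spectrum(1)[OF A] finite_subset by blast
qed

lemma quad_zero:
  fixes B C :: real
  assumes "\<forall>t. B * t + C * t\<^sup>2 \<le> 0"
  shows "B = 0"
proof (rule ccontr)
  assume B: "B \<noteq> 0"
  define t where "t = B / (\<bar>C\<bar> + 1)"
  have pos: "\<bar>C\<bar> + 1 > 0" by simp
  have a: "B * t + C * t\<^sup>2 \<ge> B * t - \<bar>C\<bar> * t\<^sup>2"
    using mult_right_mono[of "- \<bar>C\<bar>" C "t\<^sup>2"] by simp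
  have b: "B * t - \<bar>C\<bar> * t\<^sup>2 = B\<^sup>2 / (\<bar>C\<bar> + 1)\<^sup>2"
  proof -
    have gen: "B * (B / (c + 1)) - c * (B / (c + 1))\<^sup>2 = B\<^sup>2 / (c + 1)\<^sup>2" if "c \<ge> 0" for c :: real
    proof -
      have h: "c + 1 \<noteq> 0" using that by simp
      show ?thesis using h by (simp add: divide_simps power2_eq_square) (simp add: algebra_simps)
    qed
    show ?thesis unfolding t_def using gen[of "\<bar>C\<bar>"] by simp
  qed
  have c: "B\<^sup>2 / (\<bar>C\<bar> + 1)\<^sup>2 > 0" using B by simp
  have "B * t + C * t\<^sup>2 > 0" using a b c by linarith
  thus False using assms by (meson not_less)
qed

lemma qf_expand:
  "qf W M (\<lambda>w. a w + t * b w) = qf W M a + t * (\<Sum>v\<in>W. \<Sum>w\<in>W. M v w * (a v * b w + b v * a w)) + t\<^sup>2 * qf W M b"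
  unfolding qf_def by (simp add: sum.distrib sum_distrib_left algebra_simps power2_eq_square)

lemma nsq_expand:
  "nsq W (\<lambda>w. a w + t * b w) = nsq W a + 2 * t * (\<Sum>v\<in>W. a v * b v) + t\<^sup>2 * nsq W b"
  unfolding nsq_def by (simp add: sum.distrib sum_distrib_left algebra_simps power2_eq_square)

lemma qf_eig:
  assumes "\<forall>v\<in>W. (\<Sum>w\<in>W. M v w * y w) = mu * y v"
  shows "qf W M y = mu * nsq W y"
proof -
  have "qf W M y = (\<Sum>v\<in>W. y v * (\<Sum>w\<in>W. M v w * y w))"
    unfolding qf_def by (simp add: sum_distrib_left mult_ac)
  also have "\<dots> = (\<Sum>v\<in>W. mu * (y v)\<^sup>2)"
    using assms by (intro sum.cong refl) (simp add: power2_eq_square)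
  finally show ?thesis unfolding nsq_def by (simp add: sum_distrib_left)
qed

lemma nsq_pos:
  assumes fin: "finite W" and "\<exists>v\<in>W. y v \<noteq> 0"
  shows "nsq W y > 0"
proof -
  obtain v where v: "v \<in> W" "y v \<noteq> 0" using assms by blast
  have "(y v)\<^sup>2 \<le> nsq W y" unfolding nsq_def by (rule member_le_sum) (use fin v in auto)
  moreover have "(y v)\<^sup>2 > 0" using v by simp
  ultimately show ?thesis by linarith
qed

lemma sum_delta_mult:
  assumes "finite W" "v \<in> W"
  shows "(\<Sum>w\<in>W. f w * (if w = v then 1 else 0)) = (f v :: real)"
proof -
  have "(\<Sum>w\<in>W. f w * (if w = v then 1 else 0)) = (\<Sum>w\<in>W. if w = v then f w else 0)"
    by (intro sum.cong) auto
  thus ?thesis using assms by simp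
qed

lemma top_eig:
  assumes fin: "finite W" and ne: "W \<noteq> {}" and sym: "\<forall>v\<in>W. \<forall>w\<in>W. M v w = M w v"
  shows "\<exists>lam. is_eigenvalue W M lam \<and> (\<forall>mu. is_eigenvalue W M mu \<longrightarrow> mu \<le> lam)
     \<and> (\<forall>y. qf W M y \<le> lam * nsq W y)"
proof -
  obtain z where z1: "nsq W z = 1" and zmax: "\<forall>y. nsq W y = 1 \<longrightarrow> qf W M y \<le> qf W M z"
    using max_exists[OF fin ne] by blast
  define lam where "lam = qf W M z"
  have bound: "qf W M y \<le> lam * nsq W y" for y
  proof (cases "\<exists>v\<in>W. y v \<noteq> 0")
    case False
    hence "qf W M y = 0" "nsq W y = 0" unfolding qf_def nsq_def by auto
    thus ?thesis by simp
  next
    case True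
    define s where "s = nsq W y"
    have s: "s > 0" unfolding s_def by (rule nsq_pos[OF fin True])
    define c where "c = sqrt s"
    have c: "c > 0" "c\<^sup>2 = s" unfolding c_def using s by auto
    define y' where "y' = (\<lambda>v. y v / c)"
    have "nsq W y' = nsq W y / c\<^sup>2" unfolding nsq_def y'_def
      by (simp add: power_divide sum_divide_distrib)
    hence "nsq W y' = 1" using c s unfolding s_def by simp
    hence "qf W M y' \<le> lam" using zmax unfolding lam_def by blast
    moreover have "qf W M y' = qf W M y / c\<^sup>2" unfolding qf_def y'_def
      by (simp add: sum_divide_distrib power2_eq_square)
    ultimately have "qf W M y / s \<le> lam" using c by simp
    thus ?thesis using s unfolding s_def by (simp add: divide_le_eq mult.commute)
  qed
  have eig: "(\<Sum>w\<in>W. M v w * z w) = lam * z v" if v: "v \<in> W" for v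
  proof -
    define d where "d = (\<lambda>w. if w = v then 1 else 0::real)"
    define S where "S = (\<Sum>w\<in>W. M v w * z w)"
    have P: "(\<Sum>x\<in>W. \<Sum>w\<in>W. M x w * (z x * d w + d x * z w)) = 2 * S"
    proof -
      have "(\<Sum>x\<in>W. \<Sum>w\<in>W. M x w * (z x * d w + d x * z w))
          = (\<Sum>x\<in>W. M x v * z x) + (\<Sum>w\<in>W. M v w * z w)"
      proof -
        have e1: "(\<Sum>x\<in>W. \<Sum>w\<in>W. M x w * (z x * d w + d x * z w))
           = (\<Sum>x\<in>W. \<Sum>w\<in>W. (M x w * z x) * d w) + (\<Sum>x\<in>W. (\<Sum>w\<in>W. M x w * z w) * d x)"
        proof -
          have "(\<Sum>w\<in>W. M x w * (z x * d w + d x * z w)) = (\<Sum>w\<in>W. (M x w * z x) * d w) + (\<Sum>w\<in>W. M x w * z w) * d x" for x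
          proof -
            have "(\<Sum>w\<in>W. M x w * (z x * d w + d x * z w)) = (\<Sum>w\<in>W. (M x w * z x) * d w + (M x w * z w) * d x)"
              by (intro sum.cong refl) (simp add: algebra_simps)
            also have "\<dots> = (\<Sum>w\<in>W. (M x w * z x) * d w) + (\<Sum>w\<in>W. M x w * z w) * d x"
              by (simp only: sum.distrib sum_distrib_right)
            finally show ?thesis .
          qed
          thus ?thesis by (simp only: sum.distrib)
        qed
        have e2: "(\<Sum>x\<in>W. \<Sum>w\<in>W. (M x w * z x) * d w) = (\<Sum>x\<in>W. M x v * z x)"
          unfolding d_def using sum_delta_mult[OF fin v] by simp
        have e3: "(\<Sum>x\<in>W. (\<Sum>w\<in>W. M x w * z w) * d x) = (\<Sum>w\<in>W. M v w * z w)"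
          unfolding d_def by (rule sum_delta_mult[OF fin v])
        show ?thesis using e1 e2 e3 by simp
      qed
      also have "(\<Sum>x\<in>W. M x v * z x) = S" unfolding S_def using sym v
        by (intro sum.cong refl) auto
      finally show ?thesis unfolding S_def by simp
    qed
    have zd: "(\<Sum>w\<in>W. z w * d w) = z v" unfolding d_def using fin v
      by (simp add: if_distrib sum.delta cong: if_cong)
    have nd: "nsq W d = 1" unfolding nsq_def d_def using fin v
      by (simp add: if_distrib[of "\<lambda>x. x\<^sup>2"] sum.delta cong: if_cong)
    have "\<forall>t. (2 * S - 2 * lam * z v) * t + (qf W M d - lam) * t\<^sup>2 \<le> 0"
    proof
      fix t
      have "qf W M (\<lambda>w. z w + t * d w) \<le> lam * nsq W (\<lambda>w. z w + t * d w)" by (rule bound)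
      hence "lam + t * (2 * S) + t\<^sup>2 * qf W M d \<le> lam * (1 + 2 * t * z v + t\<^sup>2)"
        unfolding qf_expand nsq_expand P zd nd z1 lam_def[symmetric] by simp
      thus "(2 * S - 2 * lam * z v) * t + (qf W M d - lam) * t\<^sup>2 \<le> 0"
        by (simp add: algebra_simps)
    qed
    from quad_zero[OF this] show ?thesis unfolding S_def by simp
  qed
  have "\<exists>v\<in>W. z v \<noteq> 0"
  proof (rule ccontr)
    assume "\<not> ?thesis"
    hence "nsq W z = 0" unfolding nsq_def by auto
    thus False using z1 by simp
  qed
  hence ev: "is_eigenvalue W M lam" unfolding is_eigenvalue_def
    by (intro exI[of _ z] conjI) (auto simp: eig)
  have "mu \<le> lam" if mu_ev: "is_eigenvalue W M mu" for mu
  proof -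
    obtain y where yy: "(\<exists>v\<in>W. y v \<noteq> 0) \<and> (\<forall>v\<in>W. (\<Sum>w\<in>W. M v w * y w) = mu * y v)"
      using mu_ev unfolding is_eigenvalue_def by (rule exE)
    note y = conjunct1[OF yy] conjunct2[OF yy]
    have "mu * nsq W y \<le> lam * nsq W y" using bound[of y] unfolding qf_eig[OF y(2)] .
    moreover have "nsq W y > 0" by (rule nsq_pos[OF fin y(1)])
    ultimately show ?thesis by (rule mult_right_le_imp_le)
  qed
  hence "\<forall>mu. is_eigenvalue W M mu \<longrightarrow> mu \<le> lam" by blast
  moreover have "\<forall>y. qf W M y \<le> lam * nsq W y" using bound by blast
  ultimately show ?thesis using ev by blast
qed

lemma deg_sum:
  assumes "finite W"
  shows "real (Defs.degree W E v) = (\<Sum>w\<in>W. if E v w then 1 else 0)"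
  unfolding Defs.degree_def using sum.inter_filter[OF assms, of "\<lambda>_. 1::real" "E v"] by simp

lemma QF:
  assumes fin: "finite W"
  shows "qf W (signless_laplacian W E) x
     = (\<Sum>v\<in>W. \<Sum>w\<in>W. (if E v w then 1 else 0) * ((x v)\<^sup>2 + x v * x w))"
  unfolding qf_def
proof (rule sum.cong[OF refl])
  fix v assume v: "v \<in> W"
  define D where "D = real (Defs.degree W E v)"
  have "(\<Sum>w\<in>W. signless_laplacian W E v w * x v * x w)
      = (\<Sum>w\<in>W. (if w = v then D * x v * x v else 0) + (if E v w then 1 else 0) * (x v * x w))"
    unfolding signless_laplacian_def D_def by (intro sum.cong refl) (auto simp: algebra_simps)
  also have "\<dots> = D * (x v)\<^sup>2 + (\<Sum>w\<in>W. (if E v w then 1 else 0) * (x v * x w))"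
    using fin v by (simp add: sum.distrib power2_eq_square)
  also have "D * (x v)\<^sup>2 = (\<Sum>w\<in>W. (if E v w then 1 else 0) * (x v)\<^sup>2)"
    unfolding D_def deg_sum[OF fin] by (simp add: sum_distrib_right)
  finally show "(\<Sum>w\<in>W. signless_laplacian W E v w * x v * x w)
      = (\<Sum>w\<in>W. (if E v w then 1 else 0) * ((x v)\<^sup>2 + x v * x w))"
    by (simp add: sum.distrib ring_distribs)
qed

lemma final_alg:
  fixes N b q l :: real
  assumes N: "N \<ge> 3" and b: "b \<ge> 0" "N * b \<le> 1"
    and key: "l * (1 - b) \<ge> q * (1 - 2 * b) - 1 + N * b"
  shows "l / (N - 2) \<ge> q / (N - 1) * (1 + (1 - N * b) / ((N - 2) * (1 - b)))
           - (1 - N * b) / ((N - 2) * (1 - b))"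
proof -
  have "3 * b \<le> N * b" using N b by (intro mult_right_mono)
  hence b1: "1 - b > 0" using b by linarith
  have n2: "N - 2 > 0" "N - 1 > 0" using N by auto
  have e1: "1 + (1 - N * b) / ((N - 2) * (1 - b)) = (N - 1) * (1 - 2 * b) / ((N - 2) * (1 - b))"
    using b1 n2 by (simp add: divide_simps) (simp add: algebra_simps)
  have eq: "q / (N - 1) * (1 + (1 - N * b) / ((N - 2) * (1 - b))) - (1 - N * b) / ((N - 2) * (1 - b))
      = (q * (1 - 2 * b) - 1 + N * b) / ((N - 2) * (1 - b))"
    unfolding e1 using b1 n2 by (simp add: divide_simps)
  have "(q * (1 - 2 * b) - 1 + N * b) / ((N - 2) * (1 - b)) \<le> l * (1 - b) / ((N - 2) * (1 - b))"
    using key b1 n2 by (intro divide_right_mono) auto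
  also have "\<dots> = l / (N - 2)" using b1 by simp
  finally show ?thesis unfolding eq .
qed

theorem lemma3p2:
  fixes V :: "'a set" and E :: "'a \<Rightarrow> 'a \<Rightarrow> bool" and x :: "'a \<Rightarrow> real" and u :: 'a
  assumes "simple_graph V E"
    and "card V \<ge> 3"
    and "\<forall>v\<in>V. x v \<ge> 0"
    and "(\<Sum>v\<in>V. (x v)\<^sup>2) = 1"
    and "\<forall>v\<in>V. (\<Sum>w\<in>V. signless_laplacian V E v w * x w) = q_index V E * x v"
    and "u \<in> V"
    and "x u = Min (x ` V)"
  shows "q_index (del_vertex_V V u) (del_vertex_E E u) / (real (card V) - 2)
      \<ge> q_index V E / (real (card V) - 1)
          * (1 + (1 - real (card V) * (x u)\<^sup>2) / ((real (card V) - 2) * (1 - (x u)\<^sup>2)))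
        - (1 - real (card V) * (x u)\<^sup>2) / ((real (card V) - 2) * (1 - (x u)\<^sup>2))"
proof -
  note G = assms(1)[unfolded simple_graph_def]
  have finV: "finite V" using G by blast
  have Esym: "\<And>v w. E v w \<Longrightarrow> E w v" using G by blast
  have Eirr: "\<And>v. \<not> E v v" using G by blast
  have uV: "u \<in> V" by fact
  define n where "n = card V"
  define a where "a = x u"
  define q where "q = q_index V E"
  define V' where "V' = V - {u}"
  define E' where "E' = del_vertex_E E u"
  define e where "e = (\<lambda>v w. if E v w then 1 else 0 :: real)"
  have n3: "n \<ge> 3" using assms(2) unfolding n_def .
  have finV': "finite V'" unfolding V'_def using finV by simp
  have cardV': "card V' = n - 1" unfolding V'_def n_def using finV uV by simp
  have neV': "V' \<noteq> {}" using cardV' n3 by auto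
  have symQ': "\<forall>v\<in>V'. \<forall>w\<in>V'. signless_laplacian V' E' v w = signless_laplacian V' E' w v"
    unfolding signless_laplacian_def E'_def del_vertex_E_def using Esym by auto
  obtain lam where lam_ev: "is_eigenvalue V' (signless_laplacian V' E') lam"
    and lam_max: "\<forall>mu. is_eigenvalue V' (signless_laplacian V' E') mu \<longrightarrow> mu \<le> lam"
    and lam_bound: "\<forall>y. qf V' (signless_laplacian V' E') y \<le> lam * nsq V' y"
    using top_eig[OF finV' neV' symQ'] by blast
  have qlam: "q_index V' E' = lam"
    unfolding q_index_def
    by (rule Max_eqI[OF eig_finite[OF finV']]) (use lam_ev lam_max in auto)
  have xa: "a \<le> x v" if "v \<in> V" for v
    unfolding a_def assms(7) using finV that by simp
  have a0: "a \<ge> 0" unfolding a_def using assms(3) uV by blast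
  have sq: "a\<^sup>2 \<le> (x v)\<^sup>2" if "v \<in> V" for v using xa[OF that] a0 by (simp add: power_mono)
  have split1: "(\<Sum>v\<in>V. f v) = f u + (\<Sum>v\<in>V'. f v)" for f :: "'a \<Rightarrow> real"
    unfolding V'_def using sum.remove[OF finV uV] .
  have S': "(\<Sum>v\<in>V'. (x v)\<^sup>2) = 1 - a\<^sup>2" using assms(4) split1[of "\<lambda>v. (x v)\<^sup>2"] a_def by simp
  have na: "real n * a\<^sup>2 \<le> 1"
  proof -
    have "(\<Sum>v\<in>V. a\<^sup>2) \<le> (\<Sum>v\<in>V. (x v)\<^sup>2)" by (rule sum_mono) (use sq in auto)
    thus ?thesis using assms(4) unfolding n_def by simp
  qed
  define h where "h = (\<lambda>v w. e v w * ((x v)\<^sup>2 + x v * x w))"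
  have qfV: "qf V (signless_laplacian V E) x = q"
    using qf_eig[OF assms(5)] assms(4) unfolding nsq_def q_def by simp
  have FV: "(\<Sum>v\<in>V. \<Sum>w\<in>V. h v w) = q"
    using qfV QF[OF finV, of E x] unfolding h_def e_def by simp
  have FV': "qf V' (signless_laplacian V' E') x = (\<Sum>v\<in>V'. \<Sum>w\<in>V'. h v w)"
    unfolding QF[OF finV'] h_def e_def
    by (intro sum.cong refl) (auto simp: E'_def del_vertex_E_def V'_def)
  define d where "d = (\<Sum>w\<in>V'. e u w)"
  define s where "s = (\<Sum>w\<in>V'. e u w * x w)"
  define T where "T = (\<Sum>v\<in>V'. e u v * (x v)\<^sup>2)"
  have euu: "e u u = 0" unfolding e_def using Eirr by simp
  have evu: "e v u = e u v" for v unfolding e_def using Esym by auto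
  have hu: "(\<Sum>w\<in>V. h u w) = d * a\<^sup>2 + a * s"
  proof -
    have "(\<Sum>w\<in>V. h u w) = (\<Sum>w\<in>V'. h u w)" using split1[of "h u"] euu unfolding h_def by simp
    also have "\<dots> = (\<Sum>w\<in>V'. e u w * a\<^sup>2 + a * (e u w * x w))"
      unfolding h_def a_def by (intro sum.cong refl) (simp add: algebra_simps)
    also have "\<dots> = d * a\<^sup>2 + a * s" unfolding d_def s_def
      by (simp add: sum.distrib sum_distrib_left sum_distrib_right)
    finally show ?thesis .
  qed
  have hv: "(\<Sum>v\<in>V'. \<Sum>w\<in>V. h v w) = T + a * s + (\<Sum>v\<in>V'. \<Sum>w\<in>V'. h v w)"
  proof -
    have "(\<Sum>v\<in>V'. \<Sum>w\<in>V. h v w) = (\<Sum>v\<in>V'. h v u + (\<Sum>w\<in>V'. h v w))"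
      using split1 by simp
    also have "\<dots> = (\<Sum>v\<in>V'. h v u) + (\<Sum>v\<in>V'. \<Sum>w\<in>V'. h v w)" by (simp add: sum.distrib)
    also have "(\<Sum>v\<in>V'. h v u) = (\<Sum>v\<in>V'. e u v * (x v)\<^sup>2 + a * (e u v * x v))"
      unfolding h_def a_def evu by (intro sum.cong refl) (simp add: algebra_simps)
    also have "\<dots> = T + a * s" unfolding T_def s_def by (simp add: sum.distrib sum_distrib_left)
    finally show ?thesis .
  qed
  have qdec: "q = (\<Sum>v\<in>V'. \<Sum>w\<in>V'. h v w) + d * a\<^sup>2 + 2 * a * s + T"
    using FV split1[of "\<lambda>v. \<Sum>w\<in>V. h v w"] hu hv by simp
  have degu: "real (Defs.degree V E u) = d"
    unfolding deg_sum[OF finV] d_def using split1[of "e u"] euu unfolding e_def by simp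
  have equ: "d * a + s = q * a"
  proof -
    have "(\<Sum>w\<in>V. signless_laplacian V E u w * x w)
        = (\<Sum>w\<in>V. (if w = u then real (Defs.degree V E u) * x u else 0) + e u w * x w)"
      unfolding signless_laplacian_def e_def by (intro sum.cong refl) (auto simp: algebra_simps)
    also have "\<dots> = real (Defs.degree V E u) * x u + (\<Sum>w\<in>V. e u w * x w)"
      using finV uV by (simp add: sum.distrib)
    also have "(\<Sum>w\<in>V. e u w * x w) = s" unfolding s_def using split1[of "\<lambda>w. e u w * x w"] euu by simp
    finally show ?thesis using assms(5) uV degu unfolding q_def a_def by simp
  qed
  have Tb: "T \<le> 1 - a\<^sup>2 - (real n - 1 - d) * a\<^sup>2"
  proof -
    have "(\<Sum>v\<in>V'. (1 - e u v) * a\<^sup>2) \<le> (\<Sum>v\<in>V'. (1 - e u v) * (x v)\<^sup>2)"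
      by (rule sum_mono, rule mult_left_mono) (auto simp: e_def V'_def intro: sq)
    moreover have "(\<Sum>v\<in>V'. (1 - e u v) * a\<^sup>2) = (real n - 1 - d) * a\<^sup>2"
    proof -
      have c: "real (card V') = real n - 1" using cardV' n3 by (simp add: of_nat_diff)
      have "(\<Sum>v\<in>V'. (1 - e u v) * a\<^sup>2) = (\<Sum>v\<in>V'. (1 - e u v)) * a\<^sup>2"
        by (simp add: sum_distrib_right)
      also have "(\<Sum>v\<in>V'. (1 - e u v)) = real (card V') - d"
        unfolding d_def by (simp add: sum_subtractf)
      finally show ?thesis unfolding c .
    qed
    moreover have "(\<Sum>v\<in>V'. (1 - e u v) * (x v)\<^sup>2) = (1 - a\<^sup>2) - T"
      using S' unfolding T_def by (simp add: algebra_simps sum_subtractf)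
    ultimately show ?thesis by linarith
  qed
  have as: "a * s = q * a\<^sup>2 - d * a\<^sup>2"
  proof -
    have "s = q * a - d * a" using equ by linarith
    hence "a * s = a * (q * a - d * a)" by simp
    also have "\<dots> = q * a\<^sup>2 - d * a\<^sup>2" by (simp add: algebra_simps power2_eq_square)
    finally show ?thesis .
  qed
  have key0: "(\<Sum>v\<in>V'. \<Sum>w\<in>V'. h v w) \<ge> q * (1 - 2 * a\<^sup>2) - 1 + real n * a\<^sup>2"
    using qdec as Tb by (simp add: algebra_simps)
  have "nsq V' x = 1 - a\<^sup>2" using S' unfolding nsq_def .
  hence key: "lam * (1 - a\<^sup>2) \<ge> q * (1 - 2 * a\<^sup>2) - 1 + real n * a\<^sup>2"
    using lam_bound FV' key0 by (metis order_trans)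
  have fin: "lam / (real n - 2) \<ge> q / (real n - 1) * (1 + (1 - real n * a\<^sup>2) / ((real n - 2) * (1 - a\<^sup>2)))
           - (1 - real n * a\<^sup>2) / ((real n - 2) * (1 - a\<^sup>2))"
    by (rule final_alg) (use n3 na key in auto)
  show ?thesis using fin unfolding qlam[symmetric] q_def n_def a_def V'_def E'_def
    del_vertex_V_def .
qed

end
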